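(* There is no countable totally ordered group $U$ such that every countable totally ordered group admits an order-embedding into $U$.
   Context: A totally ordered group is a group with a total order $\le$ such that $x\le y$ implies $zx\le zy$ and $xz\le yz$ for all $x,y,z$. An order-embedding is an injective group homomorphism preserving the order. *)

theory Defs
  imports "HOL-Algebra.Group" "HOL-Library.Countable_Set"
begin

definition totally_ordered_group :: "('a, 'b) monoid_scheme \<Rightarrow> ('a \<Rightarrow> 'a \<Rightarrow> bool) \<Rightarrow> bool" where
  "totally_ordered_group G r \<longleftrightarrow> group G
     \<and> (\<forall>x\<in>carrier G. r x x)
     \<and> (\<forall>x\<in>carrier G. \<forall>y\<in>carrier G. r x y \<and> r y x \<longrightarrow> x = y)
     \<and> (\<forall>x\<in>carrier G. \<forall>y\<in>carrier G. \<forall>z\<in>carrier G. r x y \<and> r y z \<longrightarrow> r x z)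
     \<and> (\<forall>x\<in>carrier G. \<forall>y\<in>carrier G. r x y \<or> r y x)
     \<and> (\<forall>x\<in>carrier G. \<forall>y\<in>carrier G. \<forall>z\<in>carrier G. r x y \<longrightarrow>
           r (z \<otimes>\<^bsub>G\<^esub> x) (z \<otimes>\<^bsub>G\<^esub> y) \<and> r (x \<otimes>\<^bsub>G\<^esub> z) (y \<otimes>\<^bsub>G\<^esub> z))"

definition order_embedding ::
  "('a, 'c) monoid_scheme \<Rightarrow> ('a \<Rightarrow> 'a \<Rightarrow> bool) \<Rightarrow> ('b, 'd) monoid_scheme \<Rightarrow> ('b \<Rightarrow> 'b \<Rightarrow> bool) \<Rightarrow> ('a \<Rightarrow> 'b) \<Rightarrow> bool" where
  "order_embedding G leG H leH f \<longleftrightarrow> f \<in> hom G H \<and> inj_on f (carrier G)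
     \<and> (\<forall>x\<in>carrier G. \<forall>y\<in>carrier G. leG x y \<longrightarrow> leH (f x) (f y))"

end

theory Submission
  imports Defs "HOL-Analysis.Continuum_Not_Denumerable"
begin

definition padd :: "int\<times>int \<Rightarrow> int\<times>int \<Rightarrow> int\<times>int" where
  "padd x y = (fst x + fst y, snd x + snd y)"

definition Gz :: "nat monoid" where
  "Gz = \<lparr>carrier = range (to_nat :: int\<times>int \<Rightarrow> nat),
         mult = (\<lambda>x y. to_nat (padd (from_nat x) (from_nat y))),
         one = to_nat ((0,0)::int\<times>int)\<rparr>"

definition key :: "real \<Rightarrow> int\<times>int \<Rightarrow> real" where
  "key a p = real_of_int (fst p) + real_of_int (snd p) * a"

definition ple :: "real \<Rightarrow> int\<times>int \<Rightarrow> int\<times>int \<Rightarrow> bool" where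
  "ple a p q = (key a p < key a q \<or> (key a p = key a q \<and> snd p \<le> snd q))"

definition leG :: "real \<Rightarrow> nat \<Rightarrow> nat \<Rightarrow> bool" where
  "leG a x y = ple a (from_nat x) (from_nat y)"

lemma Gz_mult: "to_nat p \<otimes>\<^bsub>Gz\<^esub> to_nat q = to_nat (padd p q)"
  by (simp add: Gz_def)

lemma Gz_one: "\<one>\<^bsub>Gz\<^esub> = to_nat ((0,0)::int\<times>int)"
  by (simp add: Gz_def)

lemma Gz_carrier: "carrier Gz = range (to_nat :: int\<times>int \<Rightarrow> nat)"
  by (simp add: Gz_def)

lemma group_Gz: "group Gz"
proof (rule groupI)
  fix x y assume "x \<in> carrier Gz" "y \<in> carrier Gz"
  then show "x \<otimes>\<^bsub>Gz\<^esub> y \<in> carrier Gz" by (auto simp: Gz_def)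
next
  show "\<one>\<^bsub>Gz\<^esub> \<in> carrier Gz" by (auto simp: Gz_def)
next
  fix x y z assume "x \<in> carrier Gz" "y \<in> carrier Gz" "z \<in> carrier Gz"
  then show "x \<otimes>\<^bsub>Gz\<^esub> y \<otimes>\<^bsub>Gz\<^esub> z = x \<otimes>\<^bsub>Gz\<^esub> (y \<otimes>\<^bsub>Gz\<^esub> z)"
    by (auto simp: Gz_def padd_def)
next
  fix x assume "x \<in> carrier Gz"
  then show "\<one>\<^bsub>Gz\<^esub> \<otimes>\<^bsub>Gz\<^esub> x = x" by (auto simp: Gz_def padd_def)
next
  fix x assume "x \<in> carrier Gz"
  then obtain p :: "int\<times>int" where p: "x = to_nat p" by (auto simp: Gz_def)
  show "\<exists>y\<in>carrier Gz. y \<otimes>\<^bsub>Gz\<^esub> x = \<one>\<^bsub>Gz\<^esub>"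
    by (rule bexI[of _ "to_nat (- fst p, - snd p)"]) (auto simp: Gz_def padd_def p)
qed

lemma key_padd: "key a (padd p q) = key a p + key a q"
  by (simp add: key_def padd_def algebra_simps)

lemma tog_Gz: "totally_ordered_group Gz (leG a)"
proof -
  have A: "ple a p p" for p by (simp add: ple_def)
  have B: "ple a p q \<Longrightarrow> ple a q p \<Longrightarrow> p = q" for p q
    by (cases p; cases q) (auto simp: ple_def key_def)
  have C: "ple a p q \<Longrightarrow> ple a q r \<Longrightarrow> ple a p r" for p q r
    by (auto simp: ple_def)
  have D: "ple a p q \<or> ple a q p" for p q
    by (auto simp: ple_def)
  have E: "ple a p q \<Longrightarrow> ple a (padd r p) (padd r q) \<and> ple a (padd p r) (padd q r)" for p q r
    by (auto simp: ple_def key_padd) (auto simp: padd_def)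
  show ?thesis
    unfolding totally_ordered_group_def Gz_carrier
    using group_Gz A B C D E
    by (auto simp: leG_def Gz_mult)
qed

lemma pow1: "to_nat ((1,0)::int\<times>int) [^]\<^bsub>Gz\<^esub> (n::nat) = to_nat ((int n, 0)::int\<times>int)"
  by (induction n) (auto simp: Gz_one Gz_mult padd_def)

lemma pow2: "to_nat ((0,1)::int\<times>int) [^]\<^bsub>Gz\<^esub> (n::nat) = to_nat ((0, int n)::int\<times>int)"
  by (induction n) (auto simp: Gz_one Gz_mult padd_def)

definition Phi :: "real \<Rightarrow> (nat\<times>nat) set" where
  "Phi a = {(p,q). real p \<le> real q * a}"

lemma Phi_inj: "inj_on Phi {0<..}"
proof (rule inj_onI)
  have *: "Phi a \<noteq> Phi b" if "0 < a" "a < b" for a b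
  proof -
    obtain q :: nat where q: "1 / (b - a) < real q" using reals_Archimedean2 by blast
    have "real q * (b - a) > 1" using q that by (simp add: field_simps)
    define p where "p = nat \<lfloor>real q * b\<rfloor>"
    have qb: "real q * b \<ge> 0" using that by simp
    have "real p = of_int \<lfloor>real q * b\<rfloor>" using qb by (simp add: p_def)
    then have p1: "real p \<le> real q * b" "real p > real q * b - 1"
      by linarith+
    then have "(p,q) \<in> Phi b" "(p,q) \<notin> Phi a"
      using \<open>real q * (b - a) > 1\<close> by (auto simp: Phi_def algebra_simps)
    then show ?thesis by blast
  qed
  fix a b :: real assume "a \<in> {0<..}" "b \<in> {0<..}" "Phi a = Phi b"
  then show "a = b" using *[of a b] *[of b a] by (cases "a < b"; cases "b < a") auto
qed

theorem mainTheorem3: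
  fixes U :: "'a monoid" and leU :: "'a \<Rightarrow> 'a \<Rightarrow> bool"
  assumes "totally_ordered_group U leU" and "countable (carrier U)"
  shows "\<exists>(G :: nat monoid) leG. totally_ordered_group G leG \<and> countable (carrier G)
           \<and> \<not> (\<exists>f. order_embedding G leG U leU f)"
proof -
  define T where "T = (\<lambda>(u,v). {(p,q). leU (u [^]\<^bsub>U\<^esub> (p::nat)) (v [^]\<^bsub>U\<^esub> (q::nat))})"
  define B where "B = {a \<in> {0<..<1::real}. \<exists>u\<in>carrier U. \<exists>v\<in>carrier U. T (u,v) = Phi a}"
  have "Phi ` B \<subseteq> T ` (carrier U \<times> carrier U)"
    unfolding B_def by (auto intro!: image_eqI)
  moreover have "countable (T ` (carrier U \<times> carrier U))"
    using assms(2) by auto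
  ultimately have "countable (Phi ` B)" using countable_subset by blast
  moreover have "inj_on Phi B" using Phi_inj by (rule inj_on_subset) (auto simp: B_def)
  ultimately have cB: "countable B" using countable_image_inj_on by blast
  have "uncountable {0<..<1::real}" by (simp add: uncountable_open_interval)
  with cB have "{0<..<1::real} - B \<noteq> {}" by (metis Diff_eq_empty_iff countable_subset)
  then obtain a where a: "a \<in> {0<..<1::real}" "a \<notin> B" by blast
  have notemb: "\<not> (\<exists>f. order_embedding Gz (leG a) U leU f)"
  proof
    assume "\<exists>f. order_embedding Gz (leG a) U leU f"
    then obtain f where f: "f \<in> hom Gz U" "inj_on f (carrier Gz)"
      "\<And>x y. x \<in> carrier Gz \<Longrightarrow> y \<in> carrier Gz \<Longrightarrow> leG a x y \<Longrightarrow> leU (f x) (f y)"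
      unfolding order_embedding_def by blast
    have gU: "group U" and antiU: "\<And>x y. x \<in> carrier U \<Longrightarrow> y \<in> carrier U \<Longrightarrow> leU x y \<Longrightarrow> leU y x \<Longrightarrow> x = y"
      using assms(1) unfolding totally_ordered_group_def by blast+
    have totG: "\<And>x y. x \<in> carrier Gz \<Longrightarrow> y \<in> carrier Gz \<Longrightarrow> leG a x y \<or> leG a y x"
      using tog_Gz[of a] unfolding totally_ordered_group_def by blast
    define e1 where "e1 = to_nat ((1,0)::int\<times>int)"
    define e2 where "e2 = to_nat ((0,1)::int\<times>int)"
    have e: "e1 \<in> carrier Gz" "e2 \<in> carrier Gz" by (auto simp: e1_def e2_def Gz_carrier)
    have fc: "\<And>x. x \<in> carrier Gz \<Longrightarrow> f x \<in> carrier U" using f(1) by (auto simp: hom_def)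
    have "T (f e1, f e2) = Phi a"
    proof (rule subset_antisym; rule subsetI)
      fix pq assume "pq \<in> T (f e1, f e2)"
      then obtain p q where pq: "pq = (p,q)" and le: "leU (f e1 [^]\<^bsub>U\<^esub> p) (f e2 [^]\<^bsub>U\<^esub> q)"
        by (auto simp: T_def)
      define x where "x = to_nat ((int p, 0)::int\<times>int)"
      define y where "y = to_nat ((0, int q)::int\<times>int)"
      have xy: "x \<in> carrier Gz" "y \<in> carrier Gz" by (auto simp: x_def y_def Gz_carrier)
      have fx: "f x = f e1 [^]\<^bsub>U\<^esub> p" using hom_nat_pow[OF f(1) e(1) group_Gz gU, of p]
        by (simp add: e1_def pow1 x_def)
      have fy: "f y = f e2 [^]\<^bsub>U\<^esub> q" using hom_nat_pow[OF f(1) e(2) group_Gz gU, of q]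
        by (simp add: e2_def pow2 y_def)
      show "pq \<in> Phi a"
      proof (rule ccontr)
        assume nP: "pq \<notin> Phi a"
        then have "\<not> leG a x y" by (auto simp: pq Phi_def leG_def x_def y_def ple_def key_def)
        then have "leG a y x" using totG xy by blast
        then have "leU (f y) (f x)" using f(3) xy by blast
        then have "f x = f y" using antiU[OF fc[OF xy(1)] fc[OF xy(2)]] le fx fy by simp
        then have "x = y" using f(2) xy by (auto dest: inj_onD)
        then have "p = 0" "q = 0" by (auto simp: x_def y_def)
        then show False using nP by (simp add: pq Phi_def)
      qed
    next
      fix pq assume "pq \<in> Phi a"
      then obtain p q where pq: "pq = (p,q)" and le: "real p \<le> real q * a"
        by (auto simp: Phi_def)
      define x where "x = to_nat ((int p, 0)::int\<times>int)"
      define y where "y = to_nat ((0, int q)::int\<times>int)"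
      have xy: "x \<in> carrier Gz" "y \<in> carrier Gz" by (auto simp: x_def y_def Gz_carrier)
      have fx: "f x = f e1 [^]\<^bsub>U\<^esub> p" using hom_nat_pow[OF f(1) e(1) group_Gz gU, of p]
        by (simp add: e1_def pow1 x_def)
      have fy: "f y = f e2 [^]\<^bsub>U\<^esub> q" using hom_nat_pow[OF f(1) e(2) group_Gz gU, of q]
        by (simp add: e2_def pow2 y_def)
      have "leG a x y" using le by (auto simp: leG_def x_def y_def ple_def key_def)
      then have "leU (f x) (f y)" using f(3) xy by blast
      then show "pq \<in> T (f e1, f e2)" by (simp add: T_def pq fx fy)
    qed
    then have "a \<in> B" using a(1) fc e unfolding B_def by blast
    with a(2) show False by blast
  qed
  show ?thesis
    by (rule exI[of _ Gz], rule exI[of _ "leG a"])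
       (use tog_Gz notemb in \<open>auto simp: Gz_carrier\<close>)
qed

end
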